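(* Let $p$ be a prime and $a,b$ positive integers with $b>1$, and suppose $k=\frac{p^{ab}-1}{b(p^a-1)}$ is an integer and $u=b(p^a-1)$ is a primitive divisor of $p^{ab}-1$. Let $\omega$ be a primitive element of $\mathbb{F}_{p^{ab}}$; for $\alpha\in\mathbb{F}_{p^{ab}}$ write $\alpha=\sum_{i=0}^{b-1}c_i\omega^{ik}$ with $c_i\in\mathbb{F}_{p^a}$ and set $[\alpha]_i=c_{i-1}$ for $i=1,\ldots,b$. For $r\ge1$ define $$N_r=k^{r}\sum_{\substack{r_1+\cdots+r_b=r\\ r_i\ge0}} \frac{r!}{r_{1}!\cdots r_{b}!}\prod_{i=1}^b a_{i}(\alpha),\qquad a_{i}(\alpha)=\begin{cases}\frac{p^{a}-1}{p^{a}}\big((p^{a}-1)^{r_i-1}-(-1)^{r_i-1}\big) & \text{if } [\alpha]_i=0,\\[1mm] \frac{1}{p^{a}}\big((p^{a}-1)^{r_i}-(-1)^{r_i}\big) & \text{if } [\alpha]_i\neq 0.\end{cases}$$ Let $s\ge1$ and let $M_s$ be the number of $(x_1,\ldots,x_s)\in\mathbb{F}_{p^{ab}}^s$ with $x_1^k+\cdots+x_s^k=\alpha$. Then $$M_s=\begin{cases}\sum_{r=1}^{s}\binom{s}{r}N_r & \text{if }\alpha\neq0,\\[1mm] 1+\sum_{r=1}^{s}\binom{s}{r}N_r & \text{if }\alpha=0.\end{cases}$$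
   Context: A divisor $u$ of $p^m-1$ is primitive if $u\nmid p^h-1$ for all $1\le h<m$. Under the hypotheses, $\{1,\omega^k,\ldots,\omega^{(b-1)k}\}$ is a basis of $\mathbb{F}_{p^{ab}}$ over $\mathbb{F}_{p^a}$. *)

theory Defs
  imports Complex_Main "HOL-Computational_Algebra.Primes"
begin

definition primitive_divisor :: "nat \<Rightarrow> nat \<Rightarrow> nat \<Rightarrow> bool" where
  "primitive_divisor u p m \<longleftrightarrow> u dvd p ^ m - 1 \<and> (\<forall>h. 1 \<le> h \<and> h < m \<longrightarrow> \<not> u dvd p ^ h - 1)"

definition primitive_elem :: "'a::{finite,field} \<Rightarrow> bool" where
  "primitive_elem w \<longleftrightarrow> w \<noteq> 0 \<and> (\<forall>x::'a. x \<noteq> 0 \<longrightarrow> (\<exists>n::nat. x = w ^ n))"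

definition subfield_of_size :: "nat \<Rightarrow> 'a::field set" where
  "subfield_of_size q = {x. x ^ q = x}"

definition coords :: "nat \<Rightarrow> nat \<Rightarrow> nat \<Rightarrow> 'a::field \<Rightarrow> 'a \<Rightarrow> nat \<Rightarrow> 'a" where
  "coords q b k w \<alpha> = (THE c. (\<forall>j<b. c j \<in> subfield_of_size q) \<and> (\<forall>j\<ge>b. c j = 0)
      \<and> \<alpha> = (\<Sum>j<b. c j * w ^ (j * k)))"

definition bracket :: "nat \<Rightarrow> nat \<Rightarrow> nat \<Rightarrow> 'a::field \<Rightarrow> 'a \<Rightarrow> nat \<Rightarrow> 'a" where
  "bracket q b k w \<alpha> i = coords q b k w \<alpha> (i - 1)"

definition a_coef :: "nat \<Rightarrow> bool \<Rightarrow> nat \<Rightarrow> real" where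
  "a_coef q is_zero ri = (if is_zero
     then (real q - 1) / real q * ((real q - 1) powi (int ri - 1) - (-1) powi (int ri - 1))
     else 1 / real q * ((real q - 1) powi (int ri) - (-1) powi (int ri)))"

definition compositions :: "nat \<Rightarrow> nat \<Rightarrow> (nat \<Rightarrow> nat) set" where
  "compositions b r = {rs. (\<forall>i. i \<notin> {1..b} \<longrightarrow> rs i = 0) \<and> (\<Sum>i=1..b. rs i) = r}"

definition N_r :: "nat \<Rightarrow> nat \<Rightarrow> nat \<Rightarrow> 'a::field \<Rightarrow> 'a \<Rightarrow> nat \<Rightarrow> real" where
  "N_r q b k w \<alpha> r = real k ^ r * (\<Sum>rs\<in>compositions b r.
      fact r / (\<Prod>i=1..b. fact (rs i)) *
      (\<Prod>i=1..b. a_coef q (bracket q b k w \<alpha> i = 0) (rs i)))"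

end

theory Submission
  imports Defs "HOL-Number_Theory.Residues" "HOL-Library.Poly_Mapping" "HOL-Computational_Algebra.Polynomial"
begin


lemma ff_pow_card_minus1:
  fixes x :: "'a::{finite,field}"
  assumes "x \<noteq> 0"
  shows "x ^ (card (UNIV :: 'a set) - 1) = 1"
proof -
  have "x * (\<Prod>y\<in>UNIV-{0}. x * y) = x * x ^ (card (UNIV :: 'a set) - 1) * \<Prod>(UNIV-{0})"
    by (simp add: prod.distrib mult_ac card_Diff_singleton)
  moreover have "(\<Prod>y\<in>UNIV-{0}. x * y) = (\<Prod>y\<in>UNIV-{0}. y)"
    by (rule prod.reindex_bij_witness[of _ "\<lambda>y. y / x" "\<lambda>y. x * y"]) (use assms in auto)
  moreover have "\<Prod>(UNIV-{0::'a}) \<noteq> 0" by (simp add: prod_zero_iff)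
  ultimately show ?thesis using assms by simp
qed

locale setting =
  fixes p a b :: nat and \<omega> :: "'a::{finite,field}" and Q N u k :: nat
  assumes p: "prime p" and a: "a > 0" and b: "b > 1"
    and card: "card (UNIV :: 'a set) = p ^ (a * b)"
    and udvd: "(b * (p ^ a - 1)) dvd (p ^ (a * b) - 1)"
    and prim: "primitive_divisor (b * (p ^ a - 1)) p (a * b)"
    and om: "primitive_elem \<omega>"
    and Q_def: "Q = p ^ a" and N_def: "N = p ^ (a * b) - 1"
    and u_def: "u = b * (Q - 1)" and k_def: "k = N div u"
begin

lemma p2: "p \<ge> 2" using p by (simp add: prime_ge_2_nat)
lemma Q2: "Q \<ge> 2"
proof -
  have "p ^ 1 \<le> p ^ a" using a p2 by (intro power_increasing) auto
  thus ?thesis using p2 Q_def by simp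
qed
lemma QbN: "Q ^ b = N + 1"
proof -
  have "p ^ (a*b) \<ge> 1" using p2 by simp
  thus ?thesis by (simp add: Q_def N_def power_mult)
qed
lemma N_pos: "N > 0"
proof -
  have "Q ^ b \<ge> Q ^ 1" using Q2 b by (intro power_increasing) auto
  thus ?thesis using QbN Q2 by simp
qed
lemma cardN: "card (UNIV :: 'a set) = N + 1" using card N_def p2 by simp
lemma u_pos: "u > 0" using b Q2 u_def by simp
lemma udvdN: "u dvd N" using udvd u_def Q_def N_def by simp
lemma N_ku: "N = k * u" using udvdN k_def by simp
lemma k_pos: "k > 0" using N_ku N_pos by (cases k) auto

lemma om_nz: "\<omega> \<noteq> 0" using om by (simp add: primitive_elem_def)
lemma om_N: "\<omega> ^ N = 1" using ff_pow_card_minus1[OF om_nz] cardN by simp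
lemma om_mod: "\<omega> ^ n = \<omega> ^ (n mod N)"
proof -
  have "n = N * (n div N) + n mod N" by simp
  hence "\<omega> ^ n = (\<omega> ^ N) ^ (n div N) * \<omega> ^ (n mod N)" by (metis power_add power_mult)
  thus ?thesis by (simp add: om_N)
qed

lemma nz_image: "UNIV - {0} = (\<lambda>n. \<omega> ^ n) ` {..<N}"
proof
  show "UNIV - {0} \<subseteq> (\<lambda>n. \<omega> ^ n) ` {..<N}"
  proof
    fix x :: 'a assume "x \<in> UNIV - {0}"
    then obtain n where "x = \<omega> ^ n" using om by (auto simp: primitive_elem_def)
    hence "x = \<omega> ^ (n mod N)" using om_mod by simp
    thus "x \<in> (\<lambda>n. \<omega> ^ n) ` {..<N}" using N_pos by auto
  qed
qed (use om_nz in auto)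

lemma om_inj: "inj_on (\<lambda>n. \<omega> ^ n) {..<N}"
proof -
  have "card ((\<lambda>n. \<omega> ^ n) ` {..<N}) = N"
    using nz_image[symmetric] cardN by (simp add: card_Diff_singleton)
  thus ?thesis by (simp add: eq_card_imp_inj_on)
qed

lemma om_eq_iff: "\<omega> ^ n = \<omega> ^ m \<longleftrightarrow> n mod N = m mod N"
proof
  assume "\<omega> ^ n = \<omega> ^ m"
  hence "\<omega> ^ (n mod N) = \<omega> ^ (m mod N)" using om_mod by metis
  thus "n mod N = m mod N" using om_inj N_pos by (auto dest: inj_onD)
next
  assume "n mod N = m mod N" thus "\<omega> ^ n = \<omega> ^ m" using om_mod by metis
qed

lemma CHAR_p: "CHAR('a) = p"
proof -
  have "CHAR('a) > 0" by (simp add: finite_imp_CHAR_pos)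
  hence pc: "prime CHAR('a)" using prime_CHAR_semidom by blast
  have "CHAR('a) dvd p ^ (a*b)" using CHAR_dvd_CARD[where 'a='a] card by simp
  hence "CHAR('a) dvd p" using pc prime_dvd_power by blast
  thus ?thesis using pc p by (simp add: primes_dvd_imp_eq)
qed

lemma frob_sum: "(\<Sum>i\<in>A. f i) ^ (Q ^ n) = (\<Sum>i\<in>A. (f i :: 'a) ^ (Q ^ n))"
  by (rule freshmans_dream_sum') (auto simp: CHAR_p p Q_def power_mult[symmetric])
lemma frob_add: "((x::'a) + y) ^ (Q ^ n) = x ^ (Q ^ n) + y ^ (Q ^ n)"
  by (rule freshmans_dream') (auto simp: CHAR_p p Q_def power_mult[symmetric])

end


context setting
begin

abbreviation F :: "'a set" where "F \<equiv> subfield_of_size Q"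

lemma F_mem: "x \<in> F \<longleftrightarrow> x ^ Q = x" by (simp add: subfield_of_size_def)
lemma F_0: "0 \<in> F" using Q2 by (simp add: F_mem)
lemma F_add: "x \<in> F \<Longrightarrow> y \<in> F \<Longrightarrow> x + y \<in> F"
  using frob_add[of x y 1] by (simp add: F_mem)
lemma F_neg: assumes "x \<in> F" shows "- x \<in> F"
proof -
  have "(x + - x) ^ Q = x ^ Q + (- x) ^ Q" using frob_add[of x "-x" 1] by simp
  hence "0 = x + (-x) ^ Q" using assms Q2 by (simp add: F_mem zero_power)
  thus ?thesis by (simp add: F_mem eq_neg_iff_add_eq_0 add.commute)
qed
lemma F_diff: "x \<in> F \<Longrightarrow> y \<in> F \<Longrightarrow> x - y \<in> F"
  using F_add F_neg by (metis diff_conv_add_uminus)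
lemma F_pow: "x \<in> F \<Longrightarrow> x ^ (Q ^ n) = x"
proof (induction n)
  case (Suc n)
  have "x ^ (Q ^ Suc n) = (x ^ (Q ^ n)) ^ Q" by (simp add: power_mult[symmetric] mult.commute)
  thus ?case using Suc by (simp add: F_mem)
qed simp

abbreviation \<gamma> :: 'a where "\<gamma> \<equiv> \<omega> ^ (k * b)"

lemma N_kbQ: "N = (k * b) * (Q - 1)" using N_ku u_def by simp

lemma gamma_Q1: "\<gamma> ^ (Q - 1) = 1"
  using om_N N_kbQ by (simp add: power_mult[symmetric])

lemma F_nz_image: "F - {0} = (\<lambda>j. \<gamma> ^ j) ` {..<Q-1}"
proof
  show "F - {0} \<subseteq> (\<lambda>j. \<gamma> ^ j) ` {..<Q-1}"
  proof
    fix x assume x: "x \<in> F - {0}"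
    then obtain n where n: "n < N" "x = \<omega> ^ n" using nz_image by auto
    have "\<omega> ^ (n * Q) = \<omega> ^ n" using x n by (simp add: F_mem power_mult)
    hence "(n * Q) mod N = n mod N" by (simp add: om_eq_iff)
    hence "N dvd n * Q - n" using Q2 by (subst mod_eq_dvd_iff_nat[symmetric]) auto
    moreover have "n * Q - n = n * (Q - 1)" by (simp add: diff_mult_distrib2)
    ultimately have "(k * b) * (Q - 1) dvd n * (Q - 1)" using N_kbQ by simp
    hence "k * b dvd n" using Q2 by simp
    then obtain j where j: "n = k * b * j" by blast
    have "j < Q - 1" using n(1) N_kbQ j
      by (metis mult_less_cancel1 not_less_zero)
    moreover have "x = \<gamma> ^ j" using n j by (simp add: power_mult)
    ultimately show "x \<in> (\<lambda>j. \<gamma> ^ j) ` {..<Q-1}" by auto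
  qed
next
  show "(\<lambda>j. \<gamma> ^ j) ` {..<Q-1} \<subseteq> F - {0}"
  proof
    fix x assume "x \<in> (\<lambda>j. \<gamma> ^ j) ` {..<Q-1}"
    then obtain j where x: "x = \<gamma> ^ j" by auto
    have "x ^ Q = x ^ (Q - 1) * x" using Q2 by (metis Suc_diff_1 le_trans one_le_numeral not_less_eq_eq power_Suc2 zero_less_iff_neq_zero le_zero_eq nat.simps(3) numeral_2_eq_2)
    also have "x ^ (Q - 1) = 1" using gamma_Q1 x by (metis power_mult[symmetric] mult.commute power_one power_mult)
    finally have "x \<in> F" by (simp add: F_mem)
    moreover have "x \<noteq> 0" using x om_nz by simp
    ultimately show "x \<in> F - {0}" by simp
  qed
qed

lemma gamma_inj: "inj_on (\<lambda>j. \<gamma> ^ j) {..<Q-1}"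
proof
  fix i j assume ij: "i \<in> {..<Q-1}" "j \<in> {..<Q-1}" "\<gamma> ^ i = \<gamma> ^ j"
  hence "\<omega> ^ (k*b*i) = \<omega> ^ (k*b*j)" by (simp add: power_mult)
  hence "(k*b*i) mod N = (k*b*j) mod N" by (simp add: om_eq_iff)
  moreover have "k*b*i < N" "k*b*j < N" using ij N_kbQ k_pos b by auto
  ultimately have "k*b*i = k*b*j" by simp
  thus "i = j" using k_pos b by simp
qed

lemma card_F: "card F = Q"
proof -
  have "card (F - {0}) = Q - 1" using F_nz_image gamma_inj by (simp add: card_image)
  thus ?thesis using F_0 Q2 by (simp add: card_Diff_singleton)
qed

lemma coprime_pN: "coprime p N"
proof -
  have "\<not> p dvd N"
  proof
    assume "p dvd N"
    moreover have "p dvd p ^ (a*b)" using a b by simp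
    ultimately have "p dvd p ^ (a*b) - N" by (rule dvd_diff_nat[rotated])
    moreover have "p ^ (a*b) - N = 1" using N_def p2 by simp
    ultimately show False using p2 by simp
  qed
  thus ?thesis using p by (simp add: prime_imp_coprime)
qed

lemma frob_distinct_aux:
  assumes ij: "i < j" "j < b" "\<omega> ^ (k * Q ^ i) = \<omega> ^ (k * Q ^ j)"
  shows False
proof -
  from ij have m: "(k * Q ^ i) mod N = (k * Q ^ j) mod N" using om_eq_iff by blast
  have "Q ^ i \<le> Q ^ j" using ij Q2 by (intro power_increasing) auto
  hence le: "k * Q ^ i \<le> k * Q ^ j" by simp
  have "N dvd k * Q ^ j - k * Q ^ i" by (rule iffD1[OF mod_eq_dvd_iff_nat[OF le] m[symmetric]])
  moreover have "k * Q ^ j - k * Q ^ i = k * (Q ^ i * (Q ^ (j - i) - 1))"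
  proof -
    have "Q ^ j = Q ^ i * Q ^ (j - i)" using ij by (metis le_add_diff_inverse less_imp_le power_add)
    hence "k * Q ^ j - k * Q ^ i = k * (Q ^ i * Q ^ (j - i)) - k * (Q ^ i * 1)" by (simp only: mult_1_right)
    also have "\<dots> = k * (Q ^ i * (Q ^ (j - i) - 1))" by (simp only: diff_mult_distrib2)
    finally show ?thesis .
  qed
  ultimately have "N dvd k * (Q ^ i * (Q ^ (j - i) - 1))" by simp
  hence "k * u dvd k * (Q ^ i * (Q ^ (j - i) - 1))" by (simp only: N_ku)
  hence d: "u dvd Q ^ i * (Q ^ (j - i) - 1)" using k_pos by simp
  have "coprime p u" using coprime_divisors[OF dvd_refl udvdN coprime_pN] .
  hence "coprime u p" by (rule coprime_commute[THEN iffD1])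
  hence "coprime u (p ^ (a * i))" by simp
  hence cu: "coprime u (Q ^ i)" by (simp only: Q_def power_mult)
  have "u dvd Q ^ (j - i) - 1" using d by (simp only: coprime_dvd_mult_right_iff[OF cu])
  hence ud: "b * (p ^ a - 1) dvd p ^ (a * (j - i)) - 1" by (simp add: Q_def u_def power_mult)
  have h: "1 \<le> a * (j - i)" "a * (j - i) < a * b" using a ij by auto
  have "\<forall>h. 1 \<le> h \<and> h < a * b \<longrightarrow> \<not> b * (p ^ a - 1) dvd p ^ h - 1"
    using prim by (simp add: primitive_divisor_def)
  thus False using h ud by blast
qed

lemma frob_distinct:
  assumes "i < b" "j < b" "\<omega> ^ (k * Q ^ i) = \<omega> ^ (k * Q ^ j)"
  shows "i = j"
proof (rule ccontr)
  assume "i \<noteq> j"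
  then consider "i < j" | "j < i" by linarith
  thus False
  proof cases
    case 1 thus False using assms frob_distinct_aux by blast
  next
    case 2 thus False using assms frob_distinct_aux[of j i] by simp
  qed
qed

lemma indep:
  assumes eF: "\<forall>j<b. e j \<in> F" and s0: "(\<Sum>j<b. e j * \<omega> ^ (j * k)) = 0"
  shows "\<forall>j<b. e j = 0"
proof -
  define g where "g = (\<Sum>j<b. Polynomial.monom (e j) j)"
  have pg: "poly g x = (\<Sum>j<b. e j * x ^ j)" for x
    by (simp add: g_def poly_sum poly_monom)
  have roots: "poly g (\<omega> ^ (k * Q ^ i)) = 0" for i
  proof -
    have "poly g (\<omega> ^ (k * Q ^ i)) = (\<Sum>j<b. (e j * \<omega> ^ (j * k)) ^ (Q ^ i))"
    proof (unfold pg, rule sum.cong[OF refl])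
      fix j assume "j \<in> {..<b}"
      hence "e j ^ (Q ^ i) = e j" using eF F_pow by simp
      thus "e j * (\<omega> ^ (k * Q ^ i)) ^ j = (e j * \<omega> ^ (j * k)) ^ Q ^ i"
        by (simp add: power_mult_distrib power_mult[symmetric] mult_ac)
    qed
    also have "\<dots> = (\<Sum>j<b. e j * \<omega> ^ (j * k)) ^ (Q ^ i)" by (rule frob_sum[symmetric])
    also have "\<dots> = 0" using s0 Q2 by simp
    finally show ?thesis .
  qed
  have "g = 0"
  proof (rule ccontr)
    assume g0: "g \<noteq> 0"
    have "degree g \<le> b - 1" unfolding g_def
    proof (rule degree_sum_le)
      fix j assume "j \<in> {..<b}"
      thus "degree (Polynomial.monom (e j) j) \<le> b - 1" using degree_monom_le[of "e j" j] by simp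
    qed simp
    have "(\<lambda>i. \<omega> ^ (k * Q ^ i)) ` {..<b} \<subseteq> {x. poly g x = 0}" using roots by auto
    hence "card ((\<lambda>i. \<omega> ^ (k * Q ^ i)) ` {..<b}) \<le> card {x. poly g x = 0}"
      by (intro card_mono) auto
    also have "\<dots> \<le> degree g" using g0 by (rule card_poly_roots_bound)
    finally have "card ((\<lambda>i. \<omega> ^ (k * Q ^ i)) ` {..<b}) \<le> b - 1"
      using \<open>degree g \<le> b - 1\<close> by simp
    moreover have "inj_on (\<lambda>i. \<omega> ^ (k * Q ^ i)) {..<b}"
      using frob_distinct by (auto intro!: inj_onI)
    ultimately show False using b by (simp add: card_image)
  qed
  show ?thesis
  proof (intro allI impI)
    fix j assume "j < b"
    have "coeff g j = e j" using \<open>j < b\<close> by (simp add: g_def coeff_sum coeff_monom)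
    thus "e j = 0" using \<open>g = 0\<close> by simp
  qed
qed

end


context setting
begin

definition Phi :: "(nat \<Rightarrow> 'a) \<Rightarrow> 'a" where
  "Phi c = (\<Sum>j<b. c j * \<omega> ^ (j * k))"

lemma Phi_inj:
  assumes "\<forall>j<b. c j \<in> F" "\<forall>j<b. d j \<in> F" "Phi c = Phi d"
  shows "\<forall>j<b. c j = d j"
proof -
  have "(\<Sum>j<b. (c j - d j) * \<omega> ^ (j * k)) = Phi c - Phi d"
    by (simp add: Phi_def sum_subtractf left_diff_distrib)
  hence "(\<Sum>j<b. (c j - d j) * \<omega> ^ (j * k)) = 0" using assms(3) by simp
  moreover have "\<forall>j<b. c j - d j \<in> F" using assms(1,2) F_diff by blast
  ultimately have "\<forall>j<b. c j - d j = 0" using indep[of "\<lambda>j. c j - d j"] by blast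
  thus ?thesis by simp
qed

definition CC :: "(nat \<Rightarrow> 'a) set" where
  "CC = {c. (\<forall>j<b. c j \<in> F) \<and> (\<forall>j\<ge>b. c j = 0)}"

lemma card_CC: "card CC = Q ^ b"
proof -
  have "bij_betw (\<lambda>c. restrict c {..<b}) CC (PiE {..<b} (\<lambda>_. F))"
  proof (rule bij_betw_byWitness[where f' = "\<lambda>g j. if j < b then g j else 0"])
    show "\<forall>c\<in>CC. (\<lambda>j. if j < b then restrict c {..<b} j else 0) = c"
      by (auto simp: CC_def fun_eq_iff)
    show "\<forall>g\<in>PiE {..<b} (\<lambda>_. F). restrict (\<lambda>j. if j < b then g j else 0) {..<b} = g"
      by (auto simp: fun_eq_iff PiE_def extensional_def)
    show "(\<lambda>c. restrict c {..<b}) ` CC \<subseteq> PiE {..<b} (\<lambda>_. F)"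
    proof (rule image_subsetI)
      fix c assume "c \<in> CC"
      thus "restrict c {..<b} \<in> PiE {..<b} (\<lambda>_. F)" by (simp add: CC_def PiE_iff)
    qed
    show "(\<lambda>g j. if j < b then g j else 0) ` PiE {..<b} (\<lambda>_. F) \<subseteq> CC"
    proof (rule image_subsetI)
      fix g assume "g \<in> PiE {..<b} (\<lambda>_. F)"
      hence "\<forall>j<b. g j \<in> F" by (simp add: PiE_iff)
      thus "(\<lambda>j. if j < b then g j else 0) \<in> CC" by (simp add: CC_def)
    qed
  qed
  hence "card CC = card (PiE {..<b} (\<lambda>_. F))" by (rule bij_betw_same_card)
  also have "\<dots> = Q ^ b" by (simp add: card_PiE card_F)
  finally show ?thesis .
qed

lemma Phi_surj: "Phi ` CC = UNIV"
proof -
  have "inj_on Phi CC"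
  proof
    fix c d assume cd: "c \<in> CC" "d \<in> CC" "Phi c = Phi d"
    hence "\<forall>j<b. c j = d j" using Phi_inj by (simp add: CC_def)
    moreover have "\<forall>j\<ge>b. c j = d j" using cd by (simp add: CC_def)
    ultimately show "c = d" by (metis ext not_less)
  qed
  hence "card (Phi ` CC) = Q ^ b" by (simp add: card_image card_CC)
  hence "card (Phi ` CC) = card (UNIV :: 'a set)" using QbN cardN by simp
  thus ?thesis by (intro card_subset_eq) auto
qed

lemma coords_prop:
  fixes \<alpha> :: 'a
  defines "c \<equiv> coords Q b k \<omega> \<alpha>"
  shows "(\<forall>j<b. c j \<in> F) \<and> (\<forall>j\<ge>b. c j = 0) \<and> \<alpha> = Phi c"
proof -
  have ex: "\<exists>!c. (\<forall>j<b. c j \<in> F) \<and> (\<forall>j\<ge>b. c j = 0) \<and> \<alpha> = Phi c"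
  proof (rule ex_ex1I)
    have "\<alpha> \<in> Phi ` CC" using Phi_surj by simp
    then obtain c where "c \<in> CC" "\<alpha> = Phi c" by blast
    thus "\<exists>c. (\<forall>j<b. c j \<in> F) \<and> (\<forall>j\<ge>b. c j = 0) \<and> \<alpha> = Phi c" by (auto simp: CC_def)
  next
    fix c d assume c: "(\<forall>j<b. c j \<in> F) \<and> (\<forall>j\<ge>b. c j = 0) \<and> \<alpha> = Phi c"
      and d: "(\<forall>j<b. d j \<in> F) \<and> (\<forall>j\<ge>b. d j = 0) \<and> \<alpha> = Phi d"
    hence "\<forall>j<b. c j = d j" using Phi_inj[of c d] by simp
    moreover have "\<forall>j\<ge>b. c j = d j" using c d by simp
    ultimately show "c = d" by (metis ext not_less)
  qed
  show ?thesis unfolding c_def coords_def Phi_def[symmetric]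
    by (rule theI'[OF ex])
qed

lemma bracket_unique:
  assumes g: "g \<in> PiE {1..b} (\<lambda>_. F)"
    and s: "(\<Sum>i\<in>{1..b}. g i * \<omega> ^ ((i - 1) * k)) = \<alpha>"
  shows "\<forall>i\<in>{1..b}. g i = bracket Q b k \<omega> \<alpha> i"
proof -
  define c where "c = coords Q b k \<omega> \<alpha>"
  have "(\<Sum>i\<in>{1..b}. g i * \<omega> ^ ((i - 1) * k)) = Phi (\<lambda>j. g (Suc j))"
    unfolding Phi_def using sum.atLeast1_atMost_eq[of "\<lambda>i. g i * \<omega> ^ ((i - 1) * k)" b] by simp
  hence e1: "Phi (\<lambda>j. g (Suc j)) = \<alpha>" using s by simp
  have cp: "(\<forall>j<b. c j \<in> F) \<and> (\<forall>j\<ge>b. c j = 0) \<and> \<alpha> = Phi c"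
    unfolding c_def by (rule coords_prop)
  have "\<forall>j<b. g (Suc j) \<in> F" using g by auto
  hence eq: "\<forall>j<b. g (Suc j) = c j" using Phi_inj[of "\<lambda>j. g (Suc j)" c] cp e1 by simp
  show ?thesis
  proof
    fix i assume i: "i \<in> {1..b}"
    hence "i - 1 < b" "Suc (i - 1) = i" by auto
    hence "g i = c (i - 1)" using eq by metis
    thus "g i = bracket Q b k \<omega> \<alpha> i" by (simp add: bracket_def c_def)
  qed
qed

end


lemma single_sum: "Poly_Mapping.single y (\<Sum>i\<in>A. f i) = (\<Sum>i\<in>A. Poly_Mapping.single y (f i))"
  by (induction A rule: infinite_finite_induct) (simp_all add: single_add)

lemma lookup_sum_single:
  "Poly_Mapping.lookup (\<Sum>i\<in>A. Poly_Mapping.single (h i) (v i)) x = (\<Sum>i\<in>A. if h i = x then v i else 0)"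
  by (simp add: lookup_sum lookup_single when_def)

lemma prod_single:
  fixes v :: "'i \<Rightarrow> 'b::comm_semiring_1" and h :: "'i \<Rightarrow> 'a::comm_monoid_add"
  shows "finite I \<Longrightarrow> (\<Prod>i\<in>I. Poly_Mapping.single (h i) (v i)) = Poly_Mapping.single (\<Sum>i\<in>I. h i) (\<Prod>i\<in>I. v i)"
  by (induction I rule: finite_induct) (simp_all add: mult_single)

lemma lookup_single0_mult:
  "Poly_Mapping.lookup (Poly_Mapping.single 0 (s::'b::semiring_0) * p) x = s * Poly_Mapping.lookup p x"
  by (simp flip: mult_map_scale_conv_mult add: map.rep_eq when_def)

lemma lookup_of_nat_mult:
  "Poly_Mapping.lookup (of_nat n * (p :: 'a::monoid_add \<Rightarrow>\<^sub>0 'b::semiring_1)) x = of_nat n * Poly_Mapping.lookup p x"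
  by (simp flip: single_of_nat add: lookup_single0_mult)

lemma comp_0: "compositions 0 r = (if r = 0 then {\<lambda>_. 0} else {})"
  by (auto simp: compositions_def)

lemma comp_Suc: "compositions (Suc m) r =
    (\<lambda>(t, rs). rs(Suc m := t)) ` (SIGMA t:{..r}. compositions m (r - t))"
proof
  show "compositions (Suc m) r \<subseteq> (\<lambda>(t, rs). rs(Suc m := t)) ` (SIGMA t:{..r}. compositions m (r - t))"
  proof
    fix rs assume rs: "rs \<in> compositions (Suc m) r"
    hence z: "\<forall>i. i \<notin> {1..Suc m} \<longrightarrow> rs i = 0" and s: "(\<Sum>i=1..Suc m. rs i) = r"
      by (auto simp: compositions_def)
    have s2: "(\<Sum>i=1..Suc m. rs i) = (\<Sum>i=1..m. rs i) + rs (Suc m)" by simp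
    have "(\<Sum>i=1..m. (rs(Suc m := 0)) i) = (\<Sum>i=1..m. rs i)" by (rule sum.cong) auto
    hence "rs(Suc m := 0) \<in> compositions m (r - rs (Suc m))"
      using z s s2 by (auto simp: compositions_def)
    moreover have "rs (Suc m) \<le> r" using s s2 by linarith
    ultimately have "(rs (Suc m), rs(Suc m := 0)) \<in> (SIGMA t:{..r}. compositions m (r - t))" by auto
    moreover have "rs = (\<lambda>(t, rs). rs(Suc m := t)) (rs (Suc m), rs(Suc m := 0))" by simp
    ultimately show "rs \<in> (\<lambda>(t, rs). rs(Suc m := t)) ` (SIGMA t:{..r}. compositions m (r - t))"
      by (rule rev_image_eqI)
  qed
next
  show "(\<lambda>(t, rs). rs(Suc m := t)) ` (SIGMA t:{..r}. compositions m (r - t)) \<subseteq> compositions (Suc m) r"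
  proof (rule image_subsetI)
    fix x assume "x \<in> (SIGMA t:{..r}. compositions m (r - t))"
    then obtain t rs where x: "x = (t, rs)" "t \<le> r" "rs \<in> compositions m (r - t)" by auto
    hence z: "\<forall>i. i \<notin> {1..m} \<longrightarrow> rs i = 0" and s: "(\<Sum>i=1..m. rs i) = r - t"
      by (auto simp: compositions_def)
    have "(\<Sum>i=1..Suc m. (rs(Suc m := t)) i) = (\<Sum>i=1..m. (rs(Suc m := t)) i) + t" by simp
    also have "(\<Sum>i=1..m. (rs(Suc m := t)) i) = (\<Sum>i=1..m. rs i)" by (rule sum.cong) auto
    finally have "(\<Sum>i=1..Suc m. (rs(Suc m := t)) i) = r" using s x by simp
    moreover have "\<forall>i. i \<notin> {1..Suc m} \<longrightarrow> (rs(Suc m := t)) i = 0" using z by auto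
    ultimately show "(\<lambda>(t, rs). rs(Suc m := t)) x \<in> compositions (Suc m) r"
      using x by (simp add: compositions_def)
  qed
qed

lemma comp_inj: "inj_on (\<lambda>(t, rs). rs(Suc m := t)) (SIGMA t:{..r}. compositions m (r - t))"
proof (rule inj_onI, clarify)
  fix t rs t' rs'
  assume "rs \<in> compositions m (r - t)" "rs' \<in> compositions m (r - t')"
    and e: "rs(Suc m := t) = rs'(Suc m := t')"
  hence "rs (Suc m) = 0" "rs' (Suc m) = 0" by (auto simp: compositions_def)
  moreover have "t = t'" using fun_cong[OF e, of "Suc m"] by simp
  ultimately show "t = t' \<and> rs = rs'" using e by (metis fun_upd_triv fun_upd_upd)
qed

lemma finite_comp: "finite (compositions m r)"
proof (induction m arbitrary: r)
  case 0 thus ?case by (simp add: comp_0)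
next
  case (Suc m) thus ?case by (simp add: comp_Suc)
qed

lemma multinomial:
  fixes x :: "nat \<Rightarrow> ('a::comm_monoid_add \<Rightarrow>\<^sub>0 real)"
  shows "(\<Sum>i\<in>{1..m}. x i) ^ r = (\<Sum>rs\<in>compositions m r.
     Poly_Mapping.single 0 (fact r / (\<Prod>i\<in>{1..m}. fact (rs i))) * (\<Prod>i\<in>{1..m}. x i ^ rs i))"
proof (induction m arbitrary: r)
  case 0
  show ?case by (cases r) (simp_all add: comp_0)
next
  case (Suc m)
  define S where "S = (\<Sum>i\<in>{1..m}. x i)"
  define c where "c = (\<lambda>r rs. fact r / (\<Prod>i\<in>{1..m}. fact (rs i)) :: real)"
  define X where "X = (\<lambda>rs. \<Prod>i\<in>{1..m}. x i ^ rs i)"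
  have IH: "S ^ r' = (\<Sum>rs\<in>compositions m r'. Poly_Mapping.single 0 (c r' rs) * X rs)" for r'
    using Suc.IH unfolding S_def c_def X_def .
  have "(\<Sum>i\<in>{1..Suc m}. x i) ^ r = (x (Suc m) + S) ^ r" by (simp add: S_def add.commute)
  also have "\<dots> = (\<Sum>t\<le>r. of_nat (r choose t) * x (Suc m) ^ t * S ^ (r - t))"
    by (rule binomial_ring)
  also have "\<dots> = (\<Sum>t\<le>r. \<Sum>rs\<in>compositions m (r - t).
      Poly_Mapping.single 0 (of_nat (r choose t) * c (r - t) rs) * (X rs * x (Suc m) ^ t))"
  proof (rule sum.cong[OF refl])
    fix t assume "t \<in> {..r}"
    have "of_nat (r choose t) * x (Suc m) ^ t * S ^ (r - t) = (\<Sum>rs\<in>compositions m (r - t).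
      of_nat (r choose t) * x (Suc m) ^ t * (Poly_Mapping.single 0 (c (r - t) rs) * X rs))"
      by (simp add: IH sum_distrib_left)
    also have "\<dots> = (\<Sum>rs\<in>compositions m (r - t).
      Poly_Mapping.single 0 (of_nat (r choose t) * c (r - t) rs) * (X rs * x (Suc m) ^ t))"
    proof (rule sum.cong[OF refl])
      fix rs
      have sm: "Poly_Mapping.single 0 (a * b) = Poly_Mapping.single 0 a * Poly_Mapping.single 0 (b :: real)" for a b
        by (simp add: mult_single)
      show "of_nat (r choose t) * x (Suc m) ^ t * (Poly_Mapping.single 0 (c (r - t) rs) * X rs) =
        Poly_Mapping.single 0 (of_nat (r choose t) * c (r - t) rs) * (X rs * x (Suc m) ^ t)"
        by (simp only: sm single_of_nat mult_ac)
    qed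
    finally show "of_nat (r choose t) * x (Suc m) ^ t * S ^ (r - t) = (\<Sum>rs\<in>compositions m (r - t).
      Poly_Mapping.single 0 (of_nat (r choose t) * c (r - t) rs) * (X rs * x (Suc m) ^ t))" .
  qed
  also have "\<dots> = (\<Sum>(t, rs)\<in>(SIGMA t:{..r}. compositions m (r - t)).
      Poly_Mapping.single 0 (of_nat (r choose t) * c (r - t) rs) * (X rs * x (Suc m) ^ t))"
    by (rule sum.Sigma) (simp_all add: finite_comp)
  also have "\<dots> = (\<Sum>p\<in>(SIGMA t:{..r}. compositions m (r - t)).
      (\<lambda>rs. Poly_Mapping.single 0 (fact r / (\<Prod>i\<in>{1..Suc m}. fact (rs i))) * (\<Prod>i\<in>{1..Suc m}. x i ^ rs i))
        ((\<lambda>(t, rs). rs(Suc m := t)) p))"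
  proof -
  have key: "Poly_Mapping.single 0 (of_nat (r choose t) * c (r - t) rs) * (X rs * x (Suc m) ^ t) =
     Poly_Mapping.single 0 (fact r / (\<Prod>i\<in>{1..Suc m}. fact ((rs(Suc m := t)) i))) * (\<Prod>i\<in>{1..Suc m}. x i ^ (rs(Suc m := t)) i)"
    if t: "t \<le> r" and rs: "rs \<in> compositions m (r - t)" for t rs
  proof -
    have p1: "(\<Prod>i\<in>{1..Suc m}. fact ((rs(Suc m := t)) i)) = (\<Prod>i\<in>{1..m}. fact (rs i)) * (fact t :: real)"
    proof -
      have "(\<Prod>i\<in>{1..Suc m}. fact ((rs(Suc m := t)) i)) = (\<Prod>i\<in>{1..m}. fact ((rs(Suc m := t)) i)) * (fact t :: real)"
        by simp
      also have "(\<Prod>i\<in>{1..m}. fact ((rs(Suc m := t)) i)) = (\<Prod>i\<in>{1..m}. fact (rs i) :: real)"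
        by (rule prod.cong) auto
      finally show ?thesis .
    qed
    have p2: "(\<Prod>i\<in>{1..Suc m}. x i ^ (rs(Suc m := t)) i) = X rs * x (Suc m) ^ t"
    proof -
      have "(\<Prod>i\<in>{1..Suc m}. x i ^ (rs(Suc m := t)) i) = (\<Prod>i\<in>{1..m}. x i ^ (rs(Suc m := t)) i) * x (Suc m) ^ t"
        by simp
      also have "(\<Prod>i\<in>{1..m}. x i ^ (rs(Suc m := t)) i) = X rs"
        unfolding X_def by (rule prod.cong) auto
      finally show ?thesis .
    qed
    have "of_nat (r choose t) * c (r - t) rs = fact r / (\<Prod>i\<in>{1..Suc m}. fact ((rs(Suc m := t)) i))"
    proof -
      have nz: "(\<Prod>i\<in>{1..m}. fact (rs i) :: real) \<noteq> 0" by (simp add: prod_zero_iff)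
      show ?thesis unfolding p1 c_def using t nz by (simp add: binomial_fact field_simps)
    qed
    thus ?thesis using p2 by simp
  qed
  show ?thesis by (rule sum.cong[OF refl]) (clarsimp simp: key)
  qed
  also have "\<dots> = (\<Sum>rs\<in>compositions (Suc m) r.
     Poly_Mapping.single 0 (fact r / (\<Prod>i\<in>{1..Suc m}. fact (rs i))) * (\<Prod>i\<in>{1..Suc m}. x i ^ rs i))"
    unfolding comp_Suc by (rule sum.reindex[OF comp_inj, symmetric, unfolded comp_def])
  finally show ?case .
qed



context setting
begin

definition ff :: "nat \<Rightarrow> 'a \<Rightarrow> real" where
  "ff t c = ((real Q - 1) ^ t - (-1) ^ t) / real Q + (if c = 0 then (-1) ^ t else 0)"

definition nu :: "'a \<Rightarrow> ('a \<Rightarrow>\<^sub>0 real)" where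
  "nu w = (\<Sum>c\<in>F - {0}. Poly_Mapping.single (c * w) (real k))"

lemma finF: "finite (A :: 'a set)" by simp

lemma ff_sum: "(\<Sum>c\<in>F. ff t c) = (real Q - 1) ^ t"
proof -
  have "(\<Sum>c\<in>F. ff t c) = (\<Sum>c\<in>F. ((real Q - 1) ^ t - (-1) ^ t) / real Q) + (\<Sum>c\<in>F. if c = 0 then (-1) ^ t else 0)"
    unfolding ff_def by (rule sum.distrib)
  also have "(\<Sum>c\<in>F. if c = 0 then (-1) ^ t else 0) = ((-1) ^ t :: real)"
    using F_0 by (simp add: sum.delta)
  also have "(\<Sum>c\<in>F. ((real Q - 1) ^ t - (-1) ^ t) / real Q) = (real Q - 1) ^ t - (-1) ^ t"
    using card_F Q2 by simp
  finally show ?thesis by simp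
qed

lemma ff_Suc:
  assumes e: "e \<in> F"
  shows "(\<Sum>d\<in>F - {0}. ff t (e - d)) = ff (Suc t) e"
proof -
  have "(\<Sum>d\<in>F - {0}. ff t (e - d)) = (\<Sum>c\<in>F - {e}. ff t c)"
  proof (rule sum.reindex_bij_witness[of _ "\<lambda>c. e - c" "\<lambda>d. e - d"])
    fix d assume "d \<in> F - {0}" thus "e - d \<in> F - {e}" using F_diff e by auto
  next
    fix c assume "c \<in> F - {e}" thus "e - c \<in> F - {0}" using F_diff e by auto
  qed auto
  also have "\<dots> = (\<Sum>c\<in>F. ff t c) - ff t e" using e by (simp add: sum_diff1)
  also have "\<dots> = (real Q - 1) ^ t - ff t e" by (simp add: ff_sum)
  also have "\<dots> = ff (Suc t) e"
    using Q2 unfolding ff_def by (cases "e = 0") (simp_all add: field_simps)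
  finally show ?thesis .
qed

lemma nu_pow: "nu w ^ t = (\<Sum>c\<in>F. Poly_Mapping.single (c * w) (real k ^ t * ff t c))"
proof (induction t)
  case 0
  have "(\<Sum>c\<in>F. Poly_Mapping.single (c * w) (real k ^ 0 * ff 0 c)) =
        (\<Sum>c\<in>F. if c = 0 then Poly_Mapping.single (c * w) 1 else 0)"
    by (rule sum.cong) (simp_all add: ff_def)
  also have "\<dots> = 1" using F_0 by (simp add: sum.delta)
  finally show ?case by simp
next
  case (Suc t)
  have "nu w ^ Suc t = nu w * nu w ^ t" by simp
  also have "\<dots> = (\<Sum>d\<in>F - {0}. \<Sum>c\<in>F.
      Poly_Mapping.single (d * w + c * w) (real k * (real k ^ t * ff t c)))"
    by (subst Suc.IH) (simp only: nu_def sum_product mult_single)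
  also have "\<dots> = (\<Sum>d\<in>F - {0}. \<Sum>e\<in>F. Poly_Mapping.single (e * w) (real k ^ Suc t * ff t (e - d)))"
  proof (rule sum.cong[OF refl])
    fix d assume d: "d \<in> F - {0}"
    show "(\<Sum>c\<in>F. Poly_Mapping.single (d * w + c * w) (real k * (real k ^ t * ff t c))) =
          (\<Sum>e\<in>F. Poly_Mapping.single (e * w) (real k ^ Suc t * ff t (e - d)))"
    proof (rule sum.reindex_bij_witness[of _ "\<lambda>e. e - d" "\<lambda>c. d + c"])
      fix c assume "c \<in> F" thus "d + c \<in> F" using F_add d by auto
    next
      fix e assume "e \<in> F" thus "e - d \<in> F" using F_diff d by auto
    next
      fix c assume "c \<in> F"
      show "Poly_Mapping.single ((d + c) * w) (real k ^ Suc t * ff t (d + c - d)) =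
            Poly_Mapping.single (d * w + c * w) (real k * (real k ^ t * ff t c))"
        by (simp add: distrib_right mult.assoc)
    qed auto
  qed
  also have "\<dots> = (\<Sum>e\<in>F. \<Sum>d\<in>F - {0}. Poly_Mapping.single (e * w) (real k ^ Suc t * ff t (e - d)))"
    by (rule sum.swap)
  also have "\<dots> = (\<Sum>e\<in>F. Poly_Mapping.single (e * w) (real k ^ Suc t * ff (Suc t) e))"
  proof (rule sum.cong[OF refl])
    fix e assume e: "e \<in> F"
    show "(\<Sum>d\<in>F - {0}. Poly_Mapping.single (e * w) (real k ^ Suc t * ff t (e - d))) =
          Poly_Mapping.single (e * w) (real k ^ Suc t * ff (Suc t) e)"
      using ff_Suc[OF e, of t] by (simp add: single_sum[symmetric] sum_distrib_left[symmetric])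
  qed
  finally show ?case .
qed

lemma prod_nu:
  "(\<Prod>i\<in>{1..b}. nu (w i) ^ rs i) = (\<Sum>g\<in>PiE {1..b} (\<lambda>_. F).
     Poly_Mapping.single (\<Sum>i\<in>{1..b}. g i * w i) (\<Prod>i\<in>{1..b}. real k ^ rs i * ff (rs i) (g i)))"
proof -
  have "(\<Prod>i\<in>{1..b}. nu (w i) ^ rs i) =
     (\<Prod>i\<in>{1..b}. \<Sum>c\<in>F. Poly_Mapping.single (c * w i) (real k ^ rs i * ff (rs i) c))"
    by (simp add: nu_pow)
  also have "\<dots> = (\<Sum>g\<in>PiE {1..b} (\<lambda>_. F).
      \<Prod>i\<in>{1..b}. Poly_Mapping.single (g i * w i) (real k ^ rs i * ff (rs i) (g i)))"
    by (rule prod_sum_PiE) auto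
  also have "\<dots> = (\<Sum>g\<in>PiE {1..b} (\<lambda>_. F).
     Poly_Mapping.single (\<Sum>i\<in>{1..b}. g i * w i) (\<Prod>i\<in>{1..b}. real k ^ rs i * ff (rs i) (g i)))"
    by (simp add: prod_single)
  finally show ?thesis .
qed

abbreviation ww :: "nat \<Rightarrow> 'a" where "ww i \<equiv> \<omega> ^ ((i - 1) * k)"

lemma lookup_prod_nu:
  "Poly_Mapping.lookup (\<Prod>i\<in>{1..b}. nu (ww i) ^ rs i) \<alpha> =
     (\<Prod>i\<in>{1..b}. real k ^ rs i * ff (rs i) (bracket Q b k \<omega> \<alpha> i))"
proof -
  define c where "c = coords Q b k \<omega> \<alpha>"
  have cp: "(\<forall>j<b. c j \<in> F) \<and> (\<forall>j\<ge>b. c j = 0) \<and> \<alpha> = Phi c"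
    unfolding c_def by (rule coords_prop)
  define g0 where "g0 = restrict (bracket Q b k \<omega> \<alpha>) {1..b}"
  have g0P: "g0 \<in> PiE {1..b} (\<lambda>_. F)"
  proof -
    have "\<forall>i\<in>{1..b}. bracket Q b k \<omega> \<alpha> i \<in> F"
    proof
      fix i assume "i \<in> {1..b}"
      hence "i - 1 < b" by auto
      thus "bracket Q b k \<omega> \<alpha> i \<in> F" using cp by (simp add: bracket_def c_def)
    qed
    thus ?thesis by (simp add: g0_def restrict_PiE_iff)
  qed
  have g0s: "(\<Sum>i\<in>{1..b}. g0 i * ww i) = \<alpha>"
  proof -
    have "(\<Sum>i\<in>{1..b}. g0 i * ww i) = (\<Sum>i\<in>{1..b}. c (i - 1) * \<omega> ^ ((i - 1) * k))"
      by (rule sum.cong) (simp_all add: g0_def bracket_def c_def)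
    also have "\<dots> = Phi c"
      unfolding Phi_def using sum.atLeast1_atMost_eq[of "\<lambda>i. c (i - 1) * \<omega> ^ ((i - 1) * k)" b] by simp
    finally show ?thesis using cp by simp
  qed
  define v where "v = (\<lambda>g. \<Prod>i\<in>{1..b}. real k ^ rs i * ff (rs i) (g i))"
  have "Poly_Mapping.lookup (\<Prod>i\<in>{1..b}. nu (ww i) ^ rs i) \<alpha> =
        (\<Sum>g\<in>PiE {1..b} (\<lambda>_. F). if (\<Sum>i\<in>{1..b}. g i * ww i) = \<alpha> then v g else 0)"
    unfolding prod_nu lookup_sum_single v_def ..
  also have "\<dots> = (\<Sum>g\<in>PiE {1..b} (\<lambda>_. F). if g = g0 then v g else 0)"
  proof (rule sum.cong[OF refl])
    fix g assume g: "g \<in> PiE {1..b} (\<lambda>_. F)"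
    have "(\<Sum>i\<in>{1..b}. g i * ww i) = \<alpha> \<longleftrightarrow> g = g0"
    proof
      assume "(\<Sum>i\<in>{1..b}. g i * ww i) = \<alpha>"
      hence "\<forall>i\<in>{1..b}. g i = bracket Q b k \<omega> \<alpha> i" using bracket_unique g by blast
      thus "g = g0" using g g0P by (intro PiE_ext[of g "{1..b}" "\<lambda>_. F"]) (auto simp: g0_def)
    next
      assume "g = g0" thus "(\<Sum>i\<in>{1..b}. g i * ww i) = \<alpha>" using g0s by simp
    qed
    thus "(if (\<Sum>i\<in>{1..b}. g i * ww i) = \<alpha> then v g else 0) = (if g = g0 then v g else 0)" by simp
  qed
  also have "\<dots> = v g0" using g0P by (simp add: sum.delta finite_PiE)
  also have "\<dots> = (\<Prod>i\<in>{1..b}. real k ^ rs i * ff (rs i) (bracket Q b k \<omega> \<alpha> i))"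
    unfolding v_def by (rule prod.cong) (simp_all add: g0_def)
  finally show ?thesis .
qed

lemma ff_acoef: "ff t c = a_coef Q (c = 0) t"
proof (cases "c = 0")
  case False thus ?thesis by (simp add: ff_def a_coef_def power_int_of_nat)
next
  case True
  have Q1: "real Q - 1 \<noteq> 0" using Q2 by simp
  show ?thesis
  proof (cases t)
    case 0
    have "(real Q - 1) powi (-1) = 1 / (real Q - 1)" by (simp add: power_int_minus divide_inverse)
    thus ?thesis using True 0 Q1 Q2 by (simp add: ff_def a_coef_def field_simps)
  next
    case (Suc t')
    have "int t - 1 = int t'" using Suc by simp
    thus ?thesis using True Suc Q1 Q2 by (simp add: ff_def a_coef_def power_int_of_nat field_simps)
  qed
qed

definition mu :: "'a \<Rightarrow>\<^sub>0 real" where "mu = (\<Sum>i\<in>{1..b}. nu (ww i))"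

lemma lookup_mu_pow: "Poly_Mapping.lookup (mu ^ r) \<alpha> = N_r Q b k \<omega> \<alpha> r"
proof -
  have "mu ^ r = (\<Sum>rs\<in>compositions b r.
     Poly_Mapping.single 0 (fact r / (\<Prod>i\<in>{1..b}. fact (rs i))) * (\<Prod>i\<in>{1..b}. nu (ww i) ^ rs i))"
    unfolding mu_def by (rule multinomial)
  hence "Poly_Mapping.lookup (mu ^ r) \<alpha> = (\<Sum>rs\<in>compositions b r.
     fact r / (\<Prod>i\<in>{1..b}. fact (rs i)) * (\<Prod>i\<in>{1..b}. real k ^ rs i * ff (rs i) (bracket Q b k \<omega> \<alpha> i)))"
    by (simp only: lookup_sum lookup_single0_mult lookup_prod_nu)
  also have "\<dots> = (\<Sum>rs\<in>compositions b r. real k ^ r *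
     (fact r / (\<Prod>i\<in>{1..b}. fact (rs i)) * (\<Prod>i\<in>{1..b}. a_coef Q (bracket Q b k \<omega> \<alpha> i = 0) (rs i))))"
  proof (rule sum.cong[OF refl])
    fix rs assume rs: "rs \<in> compositions b r"
    have "(\<Prod>i\<in>{1..b}. real k ^ rs i * ff (rs i) (bracket Q b k \<omega> \<alpha> i)) =
          (\<Prod>i\<in>{1..b}. real k ^ rs i) * (\<Prod>i\<in>{1..b}. a_coef Q (bracket Q b k \<omega> \<alpha> i = 0) (rs i))"
      by (simp add: prod.distrib ff_acoef)
    also have "(\<Prod>i\<in>{1..b}. real k ^ rs i) = real k ^ r"
      using rs by (simp add: power_sum[symmetric] compositions_def)
    finally show "fact r / (\<Prod>i\<in>{1..b}. fact (rs i)) * (\<Prod>i\<in>{1..b}. real k ^ rs i * ff (rs i) (bracket Q b k \<omega> \<alpha> i)) =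
      real k ^ r * (fact r / (\<Prod>i\<in>{1..b}. fact (rs i)) * (\<Prod>i\<in>{1..b}. a_coef Q (bracket Q b k \<omega> \<alpha> i = 0) (rs i)))"
      by simp
  qed
  also have "\<dots> = N_r Q b k \<omega> \<alpha> r"
    unfolding N_r_def by (simp add: sum_distrib_left)
  finally show ?thesis .
qed

end


lemma split_sum:
  fixes g :: "nat \<Rightarrow> 'b::comm_monoid_add"
  shows "(\<Sum>n<a * c. g n) = (\<Sum>i<a. \<Sum>j<c. g (j * a + i))"
proof -
  have "(\<Sum>i<a. \<Sum>j<c. g (j * a + i)) = (\<Sum>(i, j)\<in>{..<a} \<times> {..<c}. g (j * a + i))"
    by (rule sum.cartesian_product)
  also have "\<dots> = (\<Sum>n<a * c. g n)"
  proof -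
    have h1: "j * a + i < a * c" if "i < a" "j < c" for i j
    proof -
      have "j * a + i < j * a + a" using that by simp
      also have "j * a + a = (j + 1) * a" by simp
      also have "\<dots> \<le> c * a" using that by (intro mult_le_mono1) simp
      finally show ?thesis by (simp add: mult.commute)
    qed
    have h2: "n div a < c" if "n < a * c" for n
    proof -
      have a0: "a > 0" using that by (cases a) auto
      thus ?thesis using that by (simp add: div_less_iff_less_mult mult.commute)
    qed
    have h3: "n mod a < a" if "n < a * c" for n
    proof -
      have a0: "a > 0" using that by (cases a) auto
      thus ?thesis by simp
    qed
    show ?thesis
      by (rule sum.reindex_bij_witness[of _ "\<lambda>n. (n mod a, n div a)" "\<lambda>(i, j). j * a + i"])
        (auto simp: h1 h2 h3 mult.commute)
  qed
  finally show ?thesis ..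
qed

lemma finL: "finite {xs :: 'a::finite list. length xs = s}"
  using finite_lists_length_eq[of "UNIV :: 'a set" s] by simp

context setting
begin

definition PP :: "'a \<Rightarrow>\<^sub>0 real" where "PP = (\<Sum>x\<in>UNIV. Poly_Mapping.single (x ^ k) 1)"

lemma PP_eq: "PP = 1 + mu"
proof -
  have "PP = Poly_Mapping.single (0 ^ k) 1 + (\<Sum>x\<in>UNIV - {0}. Poly_Mapping.single (x ^ k) 1)"
    unfolding PP_def by (rule sum.remove) auto
  also have "Poly_Mapping.single ((0::'a) ^ k) (1::real) = 1" using k_pos by (simp add: power_0_left)
  also have "(\<Sum>x\<in>UNIV - {0}. Poly_Mapping.single (x ^ k) (1::real)) =
             (\<Sum>n<N. Poly_Mapping.single ((\<omega> ^ n) ^ k) 1)"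
    unfolding nz_image by (rule sum.reindex[OF om_inj, unfolded comp_def])
  also have "\<dots> = (\<Sum>n<u * k. Poly_Mapping.single (\<omega> ^ (n * k)) 1)"
    by (simp add: N_ku power_mult mult.commute)
  also have "\<dots> = (\<Sum>m<u. \<Sum>j<k. Poly_Mapping.single (\<omega> ^ ((j * u + m) * k)) 1)"
    by (rule split_sum)
  also have "\<dots> = (\<Sum>m<u. Poly_Mapping.single (\<omega> ^ (m * k)) (real k))"
  proof (rule sum.cong[OF refl])
    fix m
    have "\<omega> ^ ((j * u + m) * k) = \<omega> ^ (m * k)" for j
    proof -
      have "(j * u + m) * k = m * k + j * N" by (simp add: N_ku algebra_simps)
      thus ?thesis by (simp add: om_eq_iff)
    qed
    hence "(\<Sum>j<k. Poly_Mapping.single (\<omega> ^ ((j * u + m) * k)) (1::real)) =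
           (\<Sum>j<k. Poly_Mapping.single (\<omega> ^ (m * k)) 1)" by simp
    also have "\<dots> = Poly_Mapping.single (\<omega> ^ (m * k)) (\<Sum>j<k. 1)" by (rule single_sum[symmetric])
    finally show "(\<Sum>j<k. Poly_Mapping.single (\<omega> ^ ((j * u + m) * k)) (1::real)) =
           Poly_Mapping.single (\<omega> ^ (m * k)) (real k)" by simp
  qed
  also have "\<dots> = (\<Sum>i<b. \<Sum>j<Q - 1. Poly_Mapping.single (\<omega> ^ ((j * b + i) * k)) (real k))"
    unfolding u_def by (rule split_sum)
  also have "\<dots> = (\<Sum>i<b. nu (\<omega> ^ (i * k)))"
  proof (rule sum.cong[OF refl])
    fix i
    have "(\<Sum>j<Q - 1. Poly_Mapping.single (\<omega> ^ ((j * b + i) * k)) (real k)) =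
          (\<Sum>j<Q - 1. Poly_Mapping.single (\<gamma> ^ j * \<omega> ^ (i * k)) (real k))"
    proof (rule sum.cong[OF refl])
      fix j
      have "(j * b + i) * k = k * b * j + i * k" by (simp add: algebra_simps)
      hence "\<omega> ^ ((j * b + i) * k) = \<gamma> ^ j * \<omega> ^ (i * k)" by (simp add: power_add power_mult)
      thus "Poly_Mapping.single (\<omega> ^ ((j * b + i) * k)) (real k) =
            Poly_Mapping.single (\<gamma> ^ j * \<omega> ^ (i * k)) (real k)" by simp
    qed
    also have "\<dots> = nu (\<omega> ^ (i * k))"
      unfolding nu_def F_nz_image
      by (rule sum.reindex[OF gamma_inj, unfolded comp_def, symmetric])
    finally show "(\<Sum>j<Q - 1. Poly_Mapping.single (\<omega> ^ ((j * b + i) * k)) (real k)) = nu (\<omega> ^ (i * k))" .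
  qed
  also have "\<dots> = mu"
    unfolding mu_def using sum.atLeast1_atMost_eq[of "\<lambda>i. nu (\<omega> ^ ((i - 1) * k))" b] by simp
  finally show ?thesis .
qed

lemma PP_pow: "PP ^ s = (\<Sum>xs\<in>{xs. length xs = s}. Poly_Mapping.single (\<Sum>x\<leftarrow>xs. x ^ k) 1)"
proof (induction s)
  case 0
  have "{xs :: 'a list. length xs = 0} = {[]}" by auto
  thus ?case by simp
next
  case (Suc s)
  have "PP ^ Suc s = PP * PP ^ s" by simp
  also have "\<dots> = (\<Sum>x\<in>UNIV. \<Sum>xs\<in>{xs. length xs = s}.
      Poly_Mapping.single (x ^ k + (\<Sum>x\<leftarrow>xs. x ^ k)) (1::real))"
    by (subst Suc.IH) (simp only: PP_def sum_product mult_single mult_1)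
  also have "\<dots> = (\<Sum>(x, xs)\<in>UNIV \<times> {xs. length xs = s}.
      Poly_Mapping.single (x ^ k + (\<Sum>x\<leftarrow>xs. x ^ k)) (1::real))"
    by (rule sum.cartesian_product)
  also have "\<dots> = (\<Sum>xs\<in>{xs. length xs = Suc s}. Poly_Mapping.single (\<Sum>x\<leftarrow>xs. x ^ k) 1)"
  proof (rule sum.reindex_bij_witness[of _ "\<lambda>ys. (hd ys, tl ys)" "\<lambda>(x, xs). x # xs"])
    fix ys :: "'a list" assume "ys \<in> {xs. length xs = Suc s}"
    then obtain y ys' where "ys = y # ys'" "length ys' = s" by (cases ys) auto
    thus "(case (hd ys, tl ys) of (x, xs) \<Rightarrow> x # xs) = ys" "(hd ys, tl ys) \<in> UNIV \<times> {xs. length xs = s}"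
      by auto
  qed auto
  finally show ?case .
qed

lemma count_eq:
  "real (card {xs :: 'a list. length xs = s \<and> (\<Sum>x\<leftarrow>xs. x ^ k) = \<alpha>}) = Poly_Mapping.lookup (PP ^ s) \<alpha>"
proof -
  have "Poly_Mapping.lookup (PP ^ s) \<alpha> =
        (\<Sum>xs\<in>{xs. length xs = s}. if (\<Sum>x\<leftarrow>xs. x ^ k) = \<alpha> then 1 else 0)"
    unfolding PP_pow lookup_sum_single ..
  also have "\<dots> = (\<Sum>xs\<in>{xs\<in>{xs. length xs = s}. (\<Sum>x\<leftarrow>xs. x ^ k) = \<alpha>}. 1)"
    by (rule sum.inter_filter[symmetric]) (rule finL)
  also have "{xs\<in>{xs. length xs = s}. (\<Sum>x\<leftarrow>xs. x ^ k) = \<alpha>} =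
             {xs :: 'a list. length xs = s \<and> (\<Sum>x\<leftarrow>xs. x ^ k) = \<alpha>}" by auto
  finally show ?thesis by simp
qed

lemma main:
  "real (card {xs :: 'a list. length xs = s \<and> (\<Sum>x\<leftarrow>xs. x ^ k) = \<alpha>}) =
     (if \<alpha> \<noteq> 0 then (\<Sum>r=1..s. real (s choose r) * N_r Q b k \<omega> \<alpha> r)
      else 1 + (\<Sum>r=1..s. real (s choose r) * N_r Q b k \<omega> \<alpha> r))"
proof -
  have "PP ^ s = (mu + 1) ^ s" by (simp add: PP_eq add.commute)
  also have "\<dots> = (\<Sum>r\<le>s. of_nat (s choose r) * mu ^ r * 1 ^ (s - r))" by (rule binomial_ring)
  finally have e: "Poly_Mapping.lookup (PP ^ s) \<alpha> = (\<Sum>r\<le>s. real (s choose r) * Poly_Mapping.lookup (mu ^ r) \<alpha>)"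
    by (simp add: lookup_sum lookup_of_nat_mult)
  have "{..s} = insert 0 {1..s}" by auto
  hence "(\<Sum>r\<le>s. real (s choose r) * Poly_Mapping.lookup (mu ^ r) \<alpha>) =
     real (s choose 0) * Poly_Mapping.lookup (mu ^ 0) \<alpha> + (\<Sum>r=1..s. real (s choose r) * Poly_Mapping.lookup (mu ^ r) \<alpha>)"
    by (simp only:) (rule sum.insert, auto)
  also have "(\<Sum>r=1..s. real (s choose r) * Poly_Mapping.lookup (mu ^ r) \<alpha>) =
             (\<Sum>r=1..s. real (s choose r) * N_r Q b k \<omega> \<alpha> r)"
    by (simp only: lookup_mu_pow)
  also have "real (s choose 0) * Poly_Mapping.lookup (mu ^ 0) \<alpha> = Poly_Mapping.lookup 1 \<alpha>" by simp
  also have "Poly_Mapping.lookup 1 \<alpha> = (if \<alpha> = 0 then 1 else (0::real))"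
    by (simp add: lookup_one when_def)
  finally show ?thesis using count_eq e by simp
qed

end

theorem theorem4p4:
  fixes p a b s :: nat and \<omega> \<alpha> :: "'a::{finite,field}"
  assumes "prime p" and "a > 0" and "b > 1"
    and "card (UNIV :: 'a set) = p ^ (a * b)"
    and "(b * (p ^ a - 1)) dvd (p ^ (a * b) - 1)"
    and "primitive_divisor (b * (p ^ a - 1)) p (a * b)"
    and "primitive_elem \<omega>"
    and "s \<ge> 1"
  defines "k \<equiv> (p ^ (a * b) - 1) div (b * (p ^ a - 1))"
  shows "real (card {xs :: 'a list. length xs = s \<and> (\<Sum>x\<leftarrow>xs. x ^ k) = \<alpha>}) =
     (if \<alpha> \<noteq> 0 then (\<Sum>r=1..s. real (s choose r) * N_r (p ^ a) b k \<omega> \<alpha> r)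
      else 1 + (\<Sum>r=1..s. real (s choose r) * N_r (p ^ a) b k \<omega> \<alpha> r))"
proof -
  interpret setting p a b \<omega> "p ^ a" "p ^ (a * b) - 1" "b * (p ^ a - 1)" k
    by (rule setting.intro[OF assms(1-7)]) (simp_all add: k_def)
  show ?thesis by (rule main)
qed

end
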